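(* Let $\mathcal S\subset\{1,\dots,N\}$, let $\boldsymbol\rho\in\mathbb C^N$ be supported in $\mathcal S$, let $\mathbf d=\mathcal G\boldsymbol\rho$ and $\mathcal Y=\{\vec{\mathbf z}_j:j\in\mathcal S\}$. Let $0<\varepsilon<r<1$ and let $\mathcal S_\varepsilon\subset\mathcal S$ be such that $\mathcal Y\subset\bigcup_{q\in\mathcal S_\varepsilon}\mathcal B_\varepsilon(\vec{\mathbf z}_q)$, and such that the balls $\mathcal B_r(\vec{\mathbf z}_q)$, $q\in\mathcal S_\varepsilon$, are pairwise disjoint (hence so are the balls $\mathcal B_\varepsilon(\vec{\mathbf z}_q)$, $q\in\mathcal S_\varepsilon$). Let $\mathcal Y_\varepsilon=\{\vec{\mathbf z}_j:j\in\mathcal S_\varepsilon\}$ and assume $\mathcal I(\mathcal Y_\varepsilon)<1$. Define the effective source vector $\bar{\boldsymbol\rho}\in\mathbb C^N$ by $$\bar\rho_j=\sum_{q\in\mathcal S:\ \vec{\mathbf z}_q\in\mathcal B_\varepsilon(\vec{\mathbf z}_j)}\rho_q\,\langle\mathbf g_j,\mathbf g_q\rangle\ \ (j\in\mathcal S_\varepsilon),\qquad\bar\rho_j=0\ \ (j\notin\mathcal S_\varepsilon).$$ Let $\boldsymbol\rho_\star$ be a minimizer of $\|\mathbf x\|_1$ over $\mathbf x\in\mathbb C^N$ subject to $\mathcal G\mathbf x=\mathbf d$, and decompose $\boldsymbol\rho_\star=\boldsymbol\rho_\star^{(i)}+\boldsymbol\rho_\star^{(o)}$ with $(\boldsymbol\rho_\star^{(i)})_q=(\boldsymbol\rho_\star)_q$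 if $\vec{\mathbf z}_q\in\bigcup_{j\in\mathcal S_\varepsilon}\mathcal B_r(\vec{\mathbf z}_j)$ and $0$ otherwise. Then $$\|\boldsymbol\rho_\star^{(o)}\|_1\le\frac{2\,\mathcal I(\mathcal Y_\varepsilon)}{r}\|\boldsymbol\rho_\star\|_1+\frac{\|\boldsymbol\rho\|_1-\|\bar{\boldsymbol\rho}\|_1}{r}.$$
   Context: Let $W$ be a set (the imaging region) and $M\ge1$. For each $\vec{\mathbf y}\in W$ let $\mathbf g_{\vec{\mathbf y}}\in\mathbb C^M$ be a vector with $\|\mathbf g_{\vec{\mathbf y}}\|_2=1$. Let $\vec{\mathbf z}_1,\dots,\vec{\mathbf z}_N\in W$ be distinct (grid) points, write $\mathbf g_j=\mathbf g_{\vec{\mathbf z}_j}$, and let $\mathcal G\in\mathbb C^{M\times N}$ be the matrix with columns $\mathbf g_j$. Inner product: $\langle\mathbf u,\mathbf v\rangle=\mathbf u^H\mathbf v=\sum_i\overline{u_i}v_i$. $\|\cdot\|_1$ is the $\ell_1$ norm. Semi-metric: $\mathscr D(\vec{\mathbf y},\vec{\mathbf y}')=1-|\langle\mathbf g_{\vec{\mathbf y}},\mathbf g_{\vec{\mathbf y}'}\rangle|$; ball $\mathcal B_r(\vec{\mathbf y})=\{\vec{\mathbf y}'\in W:\ \mathscr D(\vec{\mathbf y},\vec{\mathbf y}')<r\}$. Interaction coefficient: for a finite set $\mathcal Y\subset W$ and each $q$, let $\mathscr N(\vec{\mathbf z}_q)\in\mathcal Y$ be a point of $\mathcal Y$ minimizing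 $\mathscr D(\vec{\mathbf z}_q,\cdot)$ over $\mathcal Y$; then $\mathcal I(\mathcal Y)=\max_{q=1,\dots,N}\sum_{\vec{\mathbf y}\in\mathcal Y\setminus\{\mathscr N(\vec{\mathbf z}_q)\}}|\langle\mathbf g_{\vec{\mathbf y}},\mathbf g_q\rangle|$. *)

theory Defs
  imports "HOL-Analysis.Analysis"
begin

text \<open>Vectors in C^M are modelled as functions nat => complex, with indices 0..M-1;
  vectors in C^N likewise with indices 0..N-1 (grid index j corresponds to paper index j+1).\<close>

definition cinner :: "nat \<Rightarrow> (nat \<Rightarrow> complex) \<Rightarrow> (nat \<Rightarrow> complex) \<Rightarrow> complex" where
  "cinner M u v = (\<Sum>i<M. cnj (u i) * v i)"

definition l2norm :: "nat \<Rightarrow> (nat \<Rightarrow> complex) \<Rightarrow> real" where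
  "l2norm M u = sqrt (\<Sum>i<M. (cmod (u i))\<^sup>2)"

definition l1norm :: "nat \<Rightarrow> (nat \<Rightarrow> complex) \<Rightarrow> real" where
  "l1norm N x = (\<Sum>j<N. cmod (x j))"

definition semi_dist :: "nat \<Rightarrow> ('w \<Rightarrow> nat \<Rightarrow> complex) \<Rightarrow> 'w \<Rightarrow> 'w \<Rightarrow> real" where
  "semi_dist M g y y' = 1 - cmod (cinner M (g y) (g y'))"

definition sball :: "nat \<Rightarrow> ('w \<Rightarrow> nat \<Rightarrow> complex) \<Rightarrow> 'w set \<Rightarrow> real \<Rightarrow> 'w \<Rightarrow> 'w set" where
  "sball M g W r y = {y' \<in> W. semi_dist M g y y' < r}"

definition Gmul :: "nat \<Rightarrow> ('w \<Rightarrow> nat \<Rightarrow> complex) \<Rightarrow> (nat \<Rightarrow> 'w) \<Rightarrow> (nat \<Rightarrow> complex) \<Rightarrow> nat \<Rightarrow> complex" where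
  "Gmul N g z x i = (\<Sum>j<N. g (z j) i * x j)"

text \<open>Interaction coefficient I(Y), relative to a choice nn of nearest points:
  nn q is a point of Y minimizing D(z_q, .) over Y.\<close>
definition is_nearest :: "nat \<Rightarrow> ('w \<Rightarrow> nat \<Rightarrow> complex) \<Rightarrow> 'w set \<Rightarrow> 'w \<Rightarrow> 'w \<Rightarrow> bool" where
  "is_nearest M g Y x y \<longleftrightarrow> y \<in> Y \<and> (\<forall>y'\<in>Y. semi_dist M g x y \<le> semi_dist M g x y')"

definition interaction_coeff :: "nat \<Rightarrow> nat \<Rightarrow> ('w \<Rightarrow> nat \<Rightarrow> complex) \<Rightarrow> (nat \<Rightarrow> 'w)
    \<Rightarrow> (nat \<Rightarrow> 'w) \<Rightarrow> 'w set \<Rightarrow> real" where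
  "interaction_coeff M N g z nn Y =
     Max ((\<lambda>q. \<Sum>y\<in>Y - {nn q}. cmod (cinner M (g y) (g (z q)))) ` {..<N})"

end

theory Submission
  imports Defs
begin

lemma cinner_sym: "cmod (cinner M v u) = cmod (cinner M u v)"
proof -
  have "cinner M v u = cnj (cinner M u v)" by (simp add: cinner_def mult.commute)
  then show ?thesis by simp
qed

lemma cinner_le1:
  assumes "l2norm M u = 1" "l2norm M v = 1"
  shows "cmod (cinner M u v) \<le> 1"
proof -
  have su: "(\<Sum>i<M. (cmod (u i))\<^sup>2) = 1" using assms(1) unfolding l2norm_def by simp
  have sv: "(\<Sum>i<M. (cmod (v i))\<^sup>2) = 1" using assms(2) unfolding l2norm_def by simp
  have "cmod (cinner M u v) \<le> (\<Sum>i<M. cmod (cnj (u i) * v i))"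
    unfolding cinner_def by (rule norm_sum)
  also have "\<dots> \<le> (\<Sum>i<M. ((cmod (u i))\<^sup>2 + (cmod (v i))\<^sup>2) / 2)"
  proof (rule sum_mono)
    fix i
    have "0 \<le> (cmod (u i) - cmod (v i))\<^sup>2" by simp
    then show "cmod (cnj (u i) * v i) \<le> ((cmod (u i))\<^sup>2 + (cmod (v i))\<^sup>2) / 2"
      by (simp add: norm_mult power2_eq_square algebra_simps)
  qed
  also have "\<dots> = 1" using su sv by (simp add: sum_divide_distrib[symmetric] sum.distrib)
  finally show ?thesis .
qed

lemma cinner_Gmul: "cinner M u (Gmul N g z x) = (\<Sum>q<N. x q * cinner M u (g (z q)))"
  unfolding cinner_def Gmul_def
  by (simp add: sum_distrib_left sum.swap[of _ "{..<M}"] mult_ac)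

lemma cnj_sgn_mult: "cnj (sgn x) * x = complex_of_real (cmod x)"
proof (cases "x = 0")
  case False
  have "cnj (sgn x) * x = x * cnj x / complex_of_real (cmod x)"
    by (simp add: sgn_eq)
  also have "\<dots> = complex_of_real ((cmod x)\<^sup>2) / complex_of_real (cmod x)"
    using complex_norm_square[of x] by (simp del: of_real_power)
  also have "\<dots> = complex_of_real (cmod x)" using False
    by (simp add: power2_eq_square)
  finally show ?thesis .
qed simp

theorem theorem6:
  fixes W :: "'w set" and M N :: nat and g :: "'w \<Rightarrow> nat \<Rightarrow> complex"
    and z :: "nat \<Rightarrow> 'w" and S S\<epsilon> :: "nat set" and \<rho> \<rho>s :: "nat \<Rightarrow> complex"
    and \<epsilon> r :: real and nn :: "nat \<Rightarrow> 'w"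
  assumes M_pos: "M \<ge> 1"
    and g_norm: "\<forall>y\<in>W. l2norm M (g y) = 1"
    and z_in: "\<forall>j<N. z j \<in> W"
    and z_inj: "inj_on z {..<N}"
    and S_sub: "S \<subseteq> {..<N}"
    and \<rho>_supp: "\<forall>j. j \<notin> S \<longrightarrow> \<rho> j = 0"
    and eps: "0 < \<epsilon>" "\<epsilon> < r" "r < 1"
    and Se_sub: "S\<epsilon> \<subseteq> S"
    and cover: "z ` S \<subseteq> (\<Union>q\<in>S\<epsilon>. sball M g W \<epsilon> (z q))"
    and disj: "\<forall>q\<in>S\<epsilon>. \<forall>q'\<in>S\<epsilon>. q \<noteq> q' \<longrightarrow> sball M g W r (z q) \<inter> sball M g W r (z q') = {}"
    and nn: "\<forall>q<N. is_nearest M g (z ` S\<epsilon>) (z q) (nn q)"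
    and I_lt: "interaction_coeff M N g z nn (z ` S\<epsilon>) < 1"
    and \<rho>s_supp: "\<forall>j. j \<ge> N \<longrightarrow> \<rho>s j = 0"
    and \<rho>s_feas: "\<forall>i<M. Gmul N g z \<rho>s i = Gmul N g z \<rho> i"
    and \<rho>s_min: "\<forall>x. (\<forall>j. j \<ge> N \<longrightarrow> x j = 0) \<longrightarrow> (\<forall>i<M. Gmul N g z x i = Gmul N g z \<rho> i)
                    \<longrightarrow> l1norm N \<rho>s \<le> l1norm N x"
  shows "l1norm N (\<lambda>q. if z q \<in> (\<Union>j\<in>S\<epsilon>. sball M g W r (z j)) then 0 else \<rho>s q)
      \<le> 2 * interaction_coeff M N g z nn (z ` S\<epsilon>) / r * l1norm N \<rho>s
        + (l1norm N \<rho> - l1norm N (\<lambda>j. if j \<in> S\<epsilon> then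
              (\<Sum>q\<in>{q\<in>S. z q \<in> sball M g W \<epsilon> (z j)}. \<rho> q * cinner M (g (z j)) (g (z q)))
            else 0)) / r"
  proof -
  define I where "I = interaction_coeff M N g z nn (z ` S\<epsilon>)"
  define rb where "rb j = (\<Sum>q\<in>{q\<in>S. z q \<in> sball M g W \<epsilon> (z j)}. \<rho> q * cinner M (g (z j)) (g (z q)))" for j
  define s where "s j = sgn (rb j)" for j
  define c where "c j q = cinner M (g (z j)) (g (z q))" for j q
  define h where "h q = (\<Sum>j\<in>S\<epsilon>. cnj (s j) * c j q)" for q
  define inU where "inU q \<longleftrightarrow> z q \<in> (\<Union>j\<in>S\<epsilon>. sball M g W r (z j))" for q
  have finS: "finite S" using S_sub finite_subset by blast
  have finT: "finite S\<epsilon>" using Se_sub finS finite_subset by blast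
  have T_N: "S\<epsilon> \<subseteq> {..<N}" using Se_sub S_sub by blast
  have injT: "inj_on z S\<epsilon>" using z_inj T_N inj_on_subset by blast
  have sd_sym: "semi_dist M g a b = semi_dist M g b a" for a b
    by (simp add: semi_dist_def cinner_sym)
  have nnT: "\<exists>j0\<in>S\<epsilon>. nn q = z j0" if "q < N" for q
    using nn that unfolding is_nearest_def by blast
  have nn_min: "semi_dist M g (z q) (nn q) \<le> semi_dist M g (z q) (z j)" if "q < N" "j \<in> S\<epsilon>" for q j
    using nn that unfolding is_nearest_def by blast
  have nn_ball: "nn q = z j" if q: "q < N" and j: "j \<in> S\<epsilon>" and d: "semi_dist M g (z j) (z q) < r" for q j
  proof -
    obtain j0 where j0: "j0 \<in> S\<epsilon>" "nn q = z j0" using nnT q by blast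
    have "semi_dist M g (z j0) (z q) < r"
      using nn_min[OF q j] d j0 sd_sym by (metis order.strict_trans1)
    show ?thesis
    proof (rule ccontr)
      assume "nn q \<noteq> z j"
      then have "j0 \<noteq> j" using j0 by auto
      moreover have "z q \<in> sball M g W r (z j0) \<inter> sball M g W r (z j)"
        using \<open>semi_dist M g (z j0) (z q) < r\<close> d z_in q unfolding sball_def by auto
      ultimately show False using disj j0 j by blast
    qed
  qed
  have cle1: "cmod (c a b) \<le> 1" if "a < N" "b < N" for a b
    unfolding c_def by (rule cinner_le1) (use g_norm z_in that in auto)
  have hdec: "cmod (h q - cnj (s j0) * c j0 q) \<le> I" if q: "q < N" and j0: "j0 \<in> S\<epsilon>" "nn q = z j0" for q j0
  proof -
    have "h q - cnj (s j0) * c j0 q = (\<Sum>j\<in>S\<epsilon>-{j0}. cnj (s j) * c j q)"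
      unfolding h_def by (simp add: sum.remove[OF finT j0(1)])
    also have "cmod \<dots> \<le> (\<Sum>j\<in>S\<epsilon>-{j0}. cmod (c j q))"
    proof -
      have "cmod (\<Sum>j\<in>S\<epsilon>-{j0}. cnj (s j) * c j q) \<le> (\<Sum>j\<in>S\<epsilon>-{j0}. cmod (cnj (s j) * c j q))"
        by (rule norm_sum)
      also have "\<dots> \<le> (\<Sum>j\<in>S\<epsilon>-{j0}. cmod (c j q))"
        by (rule sum_mono) (simp add: norm_mult s_def norm_sgn)
      finally show ?thesis .
    qed
    also have "\<dots> = (\<Sum>y\<in>z ` S\<epsilon> - {nn q}. cmod (cinner M (g y) (g (z q))))"
    proof -
      have "z ` S\<epsilon> - {nn q} = z ` (S\<epsilon> - {j0})" using j0 injT by (auto simp: inj_on_def)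
      moreover have "inj_on z (S\<epsilon> - {j0})" using injT inj_on_subset by blast
      ultimately show ?thesis by (simp add: sum.reindex c_def)
    qed
    also have "\<dots> \<le> I" unfolding I_def interaction_coeff_def
      by (rule Max_ge) (use q in auto)
    finally show ?thesis .
  qed
  have hup: "cmod (h q) \<le> 1 + I - (if inU q then 0 else r)" if q: "q < N" for q
  proof -
    obtain j0 where j0: "j0 \<in> S\<epsilon>" "nn q = z j0" using nnT q by blast
    have A: "cmod (cnj (s j0) * c j0 q) \<le> cmod (c j0 q)"
      by (simp add: norm_mult s_def norm_sgn)
    have B: "cmod (c j0 q) \<le> 1 - (if inU q then 0 else r)"
    proof (cases "inU q")
      case True then show ?thesis using cle1 q j0 T_N by auto
    next
      case False
      then have "z q \<notin> sball M g W r (z j0)" using j0 unfolding inU_def by blast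
      then have "semi_dist M g (z j0) (z q) \<ge> r" using z_in q unfolding sball_def by auto
      then show ?thesis using False unfolding semi_dist_def c_def by simp
    qed
    have "cmod (h q) \<le> cmod (cnj (s j0) * c j0 q) + cmod (h q - cnj (s j0) * c j0 q)"
      by (metis add.commute diff_add_cancel norm_triangle_ineq)
    then show ?thesis using A B hdec[OF q j0] by linarith
  qed
  have Phi: "(\<Sum>q<N. x q * h q) = (\<Sum>j\<in>S\<epsilon>. cnj (s j) * cinner M (g (z j)) (Gmul N g z x))" for x
    by (simp add: h_def c_def cinner_Gmul sum_distrib_left sum_distrib_right sum.swap[of _ S\<epsilon>] mult_ac)
  have cG: "cinner M u (Gmul N g z \<rho>s) = cinner M u (Gmul N g z \<rho>)" for u
    unfolding cinner_def using \<rho>s_feas by simp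
  have PhiEq: "(\<Sum>q<N. \<rho>s q * h q) = (\<Sum>q<N. \<rho> q * h q)" using Phi cG by simp
  define LHS where "LHS = l1norm N (\<lambda>q. if z q \<in> (\<Union>j\<in>S\<epsilon>. sball M g W r (z j)) then 0 else \<rho>s q)"
  have U: "cmod (\<Sum>q<N. \<rho>s q * h q) \<le> (1 + I) * l1norm N \<rho>s - r * LHS"
  proof -
    have "cmod (\<Sum>q<N. \<rho>s q * h q) \<le> (\<Sum>q<N. cmod (\<rho>s q * h q))" by (rule norm_sum)
    also have "\<dots> \<le> (\<Sum>q<N. cmod (\<rho>s q) * (1 + I - (if inU q then 0 else r)))"
      by (rule sum_mono) (simp add: norm_mult hup mult_left_mono)
    also have "\<dots> = (\<Sum>q<N. (1 + I) * cmod (\<rho>s q) - r * cmod (if inU q then 0 else \<rho>s q))"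
      by (rule sum.cong) (auto simp: algebra_simps)
    also have "\<dots> = (1 + I) * l1norm N \<rho>s - r * LHS"
      unfolding LHS_def l1norm_def inU_def
      by (simp add: sum_distrib_left sum_subtractf)
    finally show ?thesis .
  qed
  define P where "P = (\<Sum>j\<in>S\<epsilon>. cmod (rb j))"
  have P_eq0: "l1norm N (\<lambda>j. if j \<in> S\<epsilon> then
              (\<Sum>q\<in>{q\<in>S. z q \<in> sball M g W \<epsilon> (z j)}. \<rho> q * cinner M (g (z j)) (g (z q)))
            else 0) = P"
  proof -
    have "l1norm N (\<lambda>j. if j \<in> S\<epsilon> then
              (\<Sum>q\<in>{q\<in>S. z q \<in> sball M g W \<epsilon> (z j)}. \<rho> q * cinner M (g (z j)) (g (z q)))
            else 0) = (\<Sum>j<N. if j \<in> S\<epsilon> then cmod (rb j) else 0)"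
      unfolding l1norm_def rb_def by (rule sum.cong) auto
    also have "\<dots> = (\<Sum>j\<in>{..<N} \<inter> S\<epsilon>. cmod (rb j))"
      by (rule sum.inter_restrict[symmetric]) simp
    also have "{..<N} \<inter> S\<epsilon> = S\<epsilon>" using T_N by blast
    finally show ?thesis unfolding P_def .
  qed
  have P_eq: "l1norm N (\<lambda>j. if j \<in> S\<epsilon> then
              (\<Sum>q\<in>{q\<in>S. z q \<in> sball M g W \<epsilon> (z j)}. \<rho> q * cinner M (g (z j)) (g (z q)))
            else 0) = P" using P_eq0 .
  have rhoS: "(\<Sum>q<N. f q) = (\<Sum>q\<in>S. f q)" if "\<And>q. q \<notin> S \<Longrightarrow> f q = 0" for f :: "nat \<Rightarrow> 'b::comm_monoid_add"
    by (rule sum.mono_neutral_right) (use S_sub that in auto)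
  define mn where "mn q = (\<Sum>j\<in>S\<epsilon>. if z q \<in> sball M g W \<epsilon> (z j) then cnj (s j) * c j q else 0)" for q
  have mn_dec: "cmod (h q - mn q) \<le> I" if q: "q \<in> S" for q
  proof -
    have qN: "q < N" using q S_sub by auto
    obtain j0 where j0: "j0 \<in> S\<epsilon>" "nn q = z j0" using nnT qN by blast
    have iff: "z q \<in> sball M g W \<epsilon> (z j) \<longleftrightarrow> j = j0" if j: "j \<in> S\<epsilon>" for j
    proof
      assume "z q \<in> sball M g W \<epsilon> (z j)"
      then have "semi_dist M g (z j) (z q) < r" using eps unfolding sball_def by auto
      then have "nn q = z j" using nn_ball qN j by blast
      then show "j = j0" using j0 j injT by (auto simp: inj_on_def)
    next
      assume "j = j0"
      obtain j' where j': "j' \<in> S\<epsilon>" "z q \<in> sball M g W \<epsilon> (z j')" using cover q by blast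
      then have "semi_dist M g (z j') (z q) < r" using eps unfolding sball_def by auto
      then have "nn q = z j'" using nn_ball qN j' by blast
      then have "j' = j0" using j0 j' injT by (auto simp: inj_on_def)
      then show "z q \<in> sball M g W \<epsilon> (z j)" using j' \<open>j = j0\<close> by simp
    qed
    have "mn q = (\<Sum>j\<in>S\<epsilon>. if j = j0 then cnj (s j) * c j q else 0)"
      unfolding mn_def by (rule sum.cong) (use iff in auto)
    also have "\<dots> = cnj (s j0) * c j0 q" using finT j0 by simp
    finally show ?thesis using hdec[OF qN j0] by simp
  qed
  have main: "(\<Sum>q\<in>S. \<rho> q * mn q) = complex_of_real P"
  proof -
    have "(\<Sum>q\<in>S. \<rho> q * mn q) = (\<Sum>j\<in>S\<epsilon>. cnj (s j) * (\<Sum>q\<in>S. if z q \<in> sball M g W \<epsilon> (z j) then \<rho> q * c j q else 0))"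
      unfolding mn_def by (simp add: sum_distrib_left sum.swap[of _ S] if_distrib mult_ac cong: if_cong)
    also have "\<dots> = (\<Sum>j\<in>S\<epsilon>. cnj (s j) * rb j)"
      unfolding rb_def c_def by (simp add: sum.inter_filter[OF finS])
    also have "\<dots> = (\<Sum>j\<in>S\<epsilon>. complex_of_real (cmod (rb j)))"
      unfolding s_def by (simp add: cnj_sgn_mult)
    also have "\<dots> = complex_of_real P" unfolding P_def by simp
    finally show ?thesis .
  qed
  have rho_l1: "l1norm N \<rho> = (\<Sum>q\<in>S. cmod (\<rho> q))"
    unfolding l1norm_def by (rule rhoS) (use \<rho>_supp in auto)
  have L: "P - I * l1norm N \<rho> \<le> cmod (\<Sum>q<N. \<rho> q * h q)"
  proof -
    have "(\<Sum>q<N. \<rho> q * h q) = (\<Sum>q\<in>S. \<rho> q * h q)" by (rule rhoS) (use \<rho>_supp in auto)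
    also have "\<dots> = complex_of_real P + (\<Sum>q\<in>S. \<rho> q * (h q - mn q))"
      using main by (simp add: algebra_simps sum.distrib sum_subtractf)
    finally have e: "(\<Sum>q<N. \<rho> q * h q) = complex_of_real P + (\<Sum>q\<in>S. \<rho> q * (h q - mn q))" .
    have "cmod (\<Sum>q\<in>S. \<rho> q * (h q - mn q)) \<le> (\<Sum>q\<in>S. cmod (\<rho> q * (h q - mn q)))" by (rule norm_sum)
    also have "\<dots> \<le> (\<Sum>q\<in>S. cmod (\<rho> q) * I)"
      by (rule sum_mono) (simp add: norm_mult mn_dec mult_left_mono)
    also have "\<dots> = I * l1norm N \<rho>" using rho_l1 by (simp add: sum_distrib_left mult.commute)
    finally have r: "cmod (\<Sum>q\<in>S. \<rho> q * (h q - mn q)) \<le> I * l1norm N \<rho>" .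
    have P0: "P \<ge> 0" unfolding P_def by (simp add: sum_nonneg)
    have nP: "cmod (complex_of_real P) = P" using P0 by simp
    have "P - cmod (\<Sum>q\<in>S. \<rho> q * (h q - mn q)) \<le> cmod (complex_of_real P + (\<Sum>q\<in>S. \<rho> q * (h q - mn q)))"
      using norm_diff_ineq[of "complex_of_real P" "(\<Sum>q\<in>S. \<rho> q * (h q - mn q))"] nP by linarith
    then show ?thesis using e r by simp
  qed
  have AB: "l1norm N \<rho>s \<le> l1norm N \<rho>"
  proof -
    have "\<forall>j. j \<ge> N \<longrightarrow> \<rho> j = 0" using \<rho>_supp S_sub by auto
    then show ?thesis using \<rho>s_min by blast
  qed
  have Ilt: "I < 1" using I_lt I_def by simp
  have key: "r * LHS \<le> (1 + I) * l1norm N \<rho>s + I * l1norm N \<rho> - P"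
    using U L unfolding PhiEq by linarith
  have "(1 + I) * l1norm N \<rho>s + I * l1norm N \<rho> \<le> 2 * I * l1norm N \<rho>s + l1norm N \<rho>"
  proof -
    have "0 \<le> (1 - I) * (l1norm N \<rho> - l1norm N \<rho>s)" using AB Ilt by simp
    then show ?thesis by (simp add: algebra_simps)
  qed
  with key have "r * LHS \<le> 2 * I * l1norm N \<rho>s + (l1norm N \<rho> - P)" by linarith
  then have "LHS \<le> (2 * I * l1norm N \<rho>s + (l1norm N \<rho> - P)) / r"
    using eps by (simp add: pos_le_divide_eq mult.commute)
  also have "\<dots> = 2 * I / r * l1norm N \<rho>s + (l1norm N \<rho> - P) / r"
    by (simp add: add_divide_distrib)
  finally show ?thesis unfolding LHS_def I_def P_eq .
qed

end
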